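(* Let $d>0$, let $I\subseteq\mathbb{R}$ be a nonempty, non-singleton interval with $\ell(I)\geq d$, and let $f: I\to\mathbb{R}$ be bounded from below. Then the function $\widetilde{f}: I\to\mathbb{R}$ defined by $$\widetilde{f}(x):=\min\Big\{f(x),\ \inf_{t\in[x+d,\infty[\cap I}f(t)\Big\}\qquad(x\in I)$$ is the greatest $d$-periodically increasing minorant of $f$; that is, $\widetilde{f}\leq f$, $\widetilde{f}$ is $d$-periodically increasing, and every $d$-periodically increasing $g: I\to\mathbb{R}$ with $g\leq f$ satisfies $g\leq\widetilde{f}$.
   Context: $\ell(I)$ denotes the length of $I$. A function $f: I\to\mathbb{R}$ is $d$-periodically increasing if $f(x)\leq f(y)$ for all $x,y\in I$ with $y-x\geq d$. The infimum over the empty set is $+\infty$. *)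

theory Defs
  imports "HOL-Analysis.Analysis"
begin

definition interval_length :: "real set \<Rightarrow> ereal" where
  "interval_length I = Sup (ereal ` I) - Inf (ereal ` I)"

definition periodically_increasing :: "real \<Rightarrow> real set \<Rightarrow> (real \<Rightarrow> real) \<Rightarrow> bool" where
  "periodically_increasing d I f \<longleftrightarrow> (\<forall>x\<in>I. \<forall>y\<in>I. y - x \<ge> d \<longrightarrow> f x \<le> f y)"

text \<open>min of f x and the infimum of f over [x+d,oo[ \<inter> I, where the infimum of the
  empty set is +oo (so the min is then just f x).\<close>
definition pi_minorant :: "real \<Rightarrow> real set \<Rightarrow> (real \<Rightarrow> real) \<Rightarrow> real \<Rightarrow> real" where
  "pi_minorant d I f x =
     (if {x + d..} \<inter> I = {} then f x
      else min (f x) (INF t\<in>{x + d..} \<inter> I. f t))"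

end

theory Submission
  imports Defs
begin

theorem theorem3p2:
  fixes d :: real and I :: "real set" and f :: "real \<Rightarrow> real"
  assumes "d > 0"
    and "is_interval I" and "\<exists>x\<in>I. \<exists>y\<in>I. x \<noteq> y"
    and "interval_length I \<ge> ereal d"
    and "bdd_below (f ` I)"
  shows "(\<forall>x\<in>I. pi_minorant d I f x \<le> f x)
    \<and> periodically_increasing d I (pi_minorant d I f)
    \<and> (\<forall>g. periodically_increasing d I g \<and> (\<forall>x\<in>I. g x \<le> f x)
          \<longrightarrow> (\<forall>x\<in>I. g x \<le> pi_minorant d I f x))"
proof (intro conjI)
  have bdd: "bdd_below (f ` ({z..} \<inter> I))" for z
    by (rule bdd_below_mono[OF assms(5)]) auto
  show "\<forall>x\<in>I. pi_minorant d I f x \<le> f x"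
    by (auto simp: pi_minorant_def)
  show "periodically_increasing d I (pi_minorant d I f)"
    unfolding periodically_increasing_def
  proof (intro ballI impI)
    fix x y assume xy: "x \<in> I" "y \<in> I" "d \<le> y - x"
    have yS: "y \<in> {x+d..} \<inter> I" using xy by auto
    hence ne: "{x+d..} \<inter> I \<noteq> {}" by auto
    have px: "pi_minorant d I f x \<le> (INF t\<in>{x + d..} \<inter> I. f t)"
      using ne by (simp add: pi_minorant_def)
    have i1: "(INF t\<in>{x + d..} \<inter> I. f t) \<le> f y"
      by (rule cINF_lower[OF bdd yS])
    show "pi_minorant d I f x \<le> pi_minorant d I f y"
    proof (cases "{y+d..} \<inter> I = {}")
      case True then show ?thesis using px i1 by (simp add: pi_minorant_def)
    next
      case False
      have "(INF t\<in>{x + d..} \<inter> I. f t) \<le> (INF t\<in>{y + d..} \<inter> I. f t)"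
        by (rule cINF_superset_mono[OF False bdd]) (use xy assms(1) in auto)
      then show ?thesis using px i1 False by (simp add: pi_minorant_def)
    qed
  qed
  show "\<forall>g. periodically_increasing d I g \<and> (\<forall>x\<in>I. g x \<le> f x)
          \<longrightarrow> (\<forall>x\<in>I. g x \<le> pi_minorant d I f x)"
  proof (intro allI impI ballI)
    fix g x assume h: "periodically_increasing d I g \<and> (\<forall>x\<in>I. g x \<le> f x)" and x: "x \<in> I"
    show "g x \<le> pi_minorant d I f x"
    proof (cases "{x+d..} \<inter> I = {}")
      case True then show ?thesis using h x by (simp add: pi_minorant_def)
    next
      case False
      have "g x \<le> (INF t\<in>{x + d..} \<inter> I. f t)"
      proof (rule cINF_greatest[OF False])
        fix t assume "t \<in> {x+d..} \<inter> I"
        then show "g x \<le> f t" using h x unfolding periodically_increasing_def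
          by (smt (verit) IntD1 IntD2 atLeast_iff)
      qed
      then show ?thesis using h x False by (simp add: pi_minorant_def)
    qed
  qed
qed

end
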